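(* Let $F:\mathbb{R}^p\to\mathbb{R}^p$ be single-valued and $T:\mathbb{R}^p\rightrightarrows\mathbb{R}^p$ be maximally $3$-cyclically monotone, $\Phi:=F+T$, and let $x^\star\in\mathrm{zer}\,\Phi$. Let $\kappa_1,\kappa_2\ge0$, $\beta>0$, $\eta>0$, and let $\{(x^k,y^k)\}$ be generated by: start from $x^0\in\mathrm{dom}\,\Phi$, set $x^{-1}=y^{-1}:=x^0$, and for $k\ge0$ $$y^k:=J_{\frac{\eta}{\beta}T}\big(x^k-\tfrac{\eta}{\beta}u^k\big),\qquad x^{k+1}:=J_{\eta T}\big(x^k-\eta Fy^k\big),$$ where $u^k\in\mathbb{R}^p$ satisfies $\|Fx^k-u^k\|^2\le\kappa_1\|Fx^k-Fy^{k-1}\|^2+\kappa_2\|Fx^k-Fx^{k-1}\|^2$. Then for any $\gamma>0$ and $k\ge0$, $$\begin{aligned}\|x^{k+1}-x^\star\|^2\le{}&\|x^k-x^\star\|^2-(1-\beta)\|x^{k+1}-x^k\|^2-\beta\|x^k-y^k\|^2-(\beta-\gamma)\|x^{k+1}-y^k\|^2\\&+\tfrac{\eta^2}{\gamma}\|Fy^k-u^k\|^2-2\eta\langle Fy^k-Fx^\star,y^k-x^\star\rangle.\end{aligned}$$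
   Context: $\mathrm{zer}\,\Phi:=\{x:0\in Fx+Tx\}$. $J_{\lambda T}:=(\mathbb{I}+\lambda T)^{-1}$ is the resolvent of $\lambda T$. $T$ is $3$-cyclically monotone if $\sum_{i=1}^3\langle u^i,x^i-x^{i+1}\rangle\ge0$ for all $(x^i,u^i)\in\mathrm{gra}\,T$ with $x^4=x^1$; maximally so if its graph is not properly contained in the graph of another $3$-cyclically monotone operator. *)

theory Defs
  imports "HOL-Analysis.Analysis"
begin

definition cyclically_monotone3 :: "('a::real_inner \<Rightarrow> 'a set) \<Rightarrow> bool" where
  "cyclically_monotone3 T \<longleftrightarrow>
     (\<forall>x1 x2 x3 u1 u2 u3. u1 \<in> T x1 \<and> u2 \<in> T x2 \<and> u3 \<in> T x3 \<longrightarrow>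
        inner u1 (x1 - x2) + inner u2 (x2 - x3) + inner u3 (x3 - x1) \<ge> 0)"

definition max_cyclically_monotone3 :: "('a::real_inner \<Rightarrow> 'a set) \<Rightarrow> bool" where
  "max_cyclically_monotone3 T \<longleftrightarrow> cyclically_monotone3 T \<and>
     (\<forall>S. cyclically_monotone3 S \<and> (\<forall>x. T x \<subseteq> S x) \<longrightarrow> S = T)"

definition op_sum :: "('a::real_vector \<Rightarrow> 'a) \<Rightarrow> ('a \<Rightarrow> 'a set) \<Rightarrow> 'a \<Rightarrow> 'a set" where
  "op_sum F T x = (\<lambda>v. F x + v) ` T x"

definition zer :: "('a::real_vector \<Rightarrow> 'a set) \<Rightarrow> 'a set" where
  "zer Phi = {x. 0 \<in> Phi x}"

definition op_dom :: "('a \<Rightarrow> 'b set) \<Rightarrow> 'a set" where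
  "op_dom Phi = {x. Phi x \<noteq> {}}"

text \<open>Resolvent J_{lam T} = (I + lam T)^{-1}, as a set-valued map:
  y \<in> J z iff z \<in> y + lam T y.\<close>
definition resolvent :: "real \<Rightarrow> ('a::real_vector \<Rightarrow> 'a set) \<Rightarrow> 'a \<Rightarrow> 'a set" where
  "resolvent lam T z = {y. z \<in> (\<lambda>v. y + lam *\<^sub>R v) ` T y}"

end

theory Submission
  imports Defs
begin

lemma young_aux:
  fixes p q :: "'a::real_inner" and g e :: real
  assumes "g > 0"
  shows "(norm (g *\<^sub>R p + e *\<^sub>R q))\<^sup>2 / g = g * inner p p + 2 * e * inner p q + e\<^sup>2 / g * inner q q"
  using assms unfolding power2_norm_eq_inner
  by (simp add: inner_add_left inner_add_right inner_commute field_simps power2_eq_square)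

lemma key:
  fixes a b c z Fc Fz u v w s :: "'a::real_inner" and \<beta> \<eta> \<gamma> :: real
  assumes beta: "\<beta> > 0" and eta: "\<eta> > 0" and g: "\<gamma> > 0"
    and mon: "0 \<le> inner w (b - z) + inner s (z - c) + inner v (c - b)"
    and hv: "a - (\<eta>/\<beta>) *\<^sub>R u = c + (\<eta>/\<beta>) *\<^sub>R v"
    and hw: "a - \<eta> *\<^sub>R Fc = b + \<eta> *\<^sub>R w"
    and hs: "0 = Fz + s"
  shows "(norm (b - z))\<^sup>2 \<le>
      (norm (a - z))\<^sup>2 - (1 - \<beta>) * (norm (b - a))\<^sup>2
      - \<beta> * (norm (a - c))\<^sup>2 - (\<beta> - \<gamma>) * (norm (b - c))\<^sup>2
      + \<eta>\<^sup>2 / \<gamma> * (norm (Fc - u))\<^sup>2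
      - 2 * \<eta> * inner (Fc - Fz) (c - z)"
proof -
  have v: "\<eta> *\<^sub>R v = \<beta> *\<^sub>R (a - c) - \<eta> *\<^sub>R u"
  proof -
    have "\<beta> *\<^sub>R (a - (\<eta>/\<beta>) *\<^sub>R u) = \<beta> *\<^sub>R (c + (\<eta>/\<beta>) *\<^sub>R v)" using hv by simp
    thus ?thesis using beta by (simp add: algebra_simps)
  qed
  have w: "\<eta> *\<^sub>R w = (a - b) - \<eta> *\<^sub>R Fc" using hw by (simp add: algebra_simps)
  have s: "s = - Fz" using hs by (simp add: eq_neg_iff_add_eq_0 add.commute)
  have mon2: "0 \<le> inner (\<eta> *\<^sub>R w) (b - z) + inner (\<eta> *\<^sub>R s) (z - c) + inner (\<eta> *\<^sub>R v) (c - b)"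
    using mult_nonneg_nonneg[OF less_imp_le[OF eta] mon] by (simp add: algebra_simps)
  have E: "0 \<le> inner (a - b - \<eta> *\<^sub>R Fc) (b - z) - \<eta> * inner Fz (z - c) + inner (\<beta> *\<^sub>R (a - c) - \<eta> *\<^sub>R u) (c - b)"
    using mon2 unfolding w v s by simp
  have Y: "0 \<le> (norm (\<gamma> *\<^sub>R (b - c) + \<eta> *\<^sub>R (Fc - u)))\<^sup>2 / \<gamma>" using g by simp
  also have "\<dots> = \<gamma> * inner (b - c) (b - c) + 2 * \<eta> * inner (b - c) (Fc - u) + \<eta>\<^sup>2 / \<gamma> * inner (Fc - u) (Fc - u)"
    using young_aux[OF g] by blast
  finally have Y': "0 \<le> \<gamma> * inner (b - c) (b - c) + 2 * \<eta> * inner (b - c) (Fc - u) + \<eta>\<^sup>2 / \<gamma> * inner (Fc - u) (Fc - u)" .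
  show ?thesis using E Y' unfolding power2_norm_eq_inner
    by (simp add: inner_diff_left inner_diff_right inner_add_left inner_add_right inner_commute algebra_simps)
qed

theorem lemma4:
  fixes F :: "real^'p \<Rightarrow> real^'p" and T :: "real^'p \<Rightarrow> (real^'p) set"
    and xstar :: "real^'p" and x y u :: "nat \<Rightarrow> real^'p"
    and \<kappa>1 \<kappa>2 \<beta> \<eta> :: real
  assumes T: "max_cyclically_monotone3 T"
    and xstar: "xstar \<in> zer (op_sum F T)"
    and k1: "\<kappa>1 \<ge> 0" and k2: "\<kappa>2 \<ge> 0" and beta: "\<beta> > 0" and eta: "\<eta> > 0"
    and x0: "x 0 \<in> op_dom (op_sum F T)"
    and ystep: "\<And>k. y k \<in> resolvent (\<eta> / \<beta>) T (x k - (\<eta> / \<beta>) *\<^sub>R u k)"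
    and xstep: "\<And>k. x (Suc k) \<in> resolvent \<eta> T (x k - \<eta> *\<^sub>R F (y k))"
    and uerr: "\<And>k. (norm (F (x k) - u k))\<^sup>2
        \<le> \<kappa>1 * (norm (F (x k) - F (if k = 0 then x 0 else y (k - 1))))\<^sup>2
          + \<kappa>2 * (norm (F (x k) - F (if k = 0 then x 0 else x (k - 1))))\<^sup>2"
  shows "\<forall>\<gamma>>0. \<forall>k. (norm (x (Suc k) - xstar))\<^sup>2 \<le>
      (norm (x k - xstar))\<^sup>2 - (1 - \<beta>) * (norm (x (Suc k) - x k))\<^sup>2
      - \<beta> * (norm (x k - y k))\<^sup>2 - (\<beta> - \<gamma>) * (norm (x (Suc k) - y k))\<^sup>2
      + \<eta>\<^sup>2 / \<gamma> * (norm (F (y k) - u k))\<^sup>2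
      - 2 * \<eta> * inner (F (y k) - F xstar) (y k - xstar)"
proof (intro allI impI)
  fix \<gamma> :: real and k :: nat
  assume g: "\<gamma> > 0"
  from ystep[of k] obtain v where v: "v \<in> T (y k)" and hv: "x k - (\<eta> / \<beta>) *\<^sub>R u k = y k + (\<eta> / \<beta>) *\<^sub>R v"
    unfolding resolvent_def by auto
  from xstep[of k] obtain w where w: "w \<in> T (x (Suc k))" and hw: "x k - \<eta> *\<^sub>R F (y k) = x (Suc k) + \<eta> *\<^sub>R w"
    unfolding resolvent_def by auto
  from xstar obtain s where s: "s \<in> T xstar" and hs: "0 = F xstar + s"
    unfolding zer_def op_sum_def by auto
  have cm: "cyclically_monotone3 T" using T unfolding max_cyclically_monotone3_def by blast
  have mon: "0 \<le> inner w (x (Suc k) - xstar) + inner s (xstar - y k) + inner v (y k - x (Suc k))"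
    using cm w s v unfolding cyclically_monotone3_def by blast
  show "(norm (x (Suc k) - xstar))\<^sup>2 \<le>
      (norm (x k - xstar))\<^sup>2 - (1 - \<beta>) * (norm (x (Suc k) - x k))\<^sup>2
      - \<beta> * (norm (x k - y k))\<^sup>2 - (\<beta> - \<gamma>) * (norm (x (Suc k) - y k))\<^sup>2
      + \<eta>\<^sup>2 / \<gamma> * (norm (F (y k) - u k))\<^sup>2
      - 2 * \<eta> * inner (F (y k) - F xstar) (y k - xstar)"
    by (rule key[OF beta eta g mon hv hw hs])
qed

end
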